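(* Let $f:\mathbb{R}\to[0,\infty)$ be a Borel-measurable, even, nonnegative function satisfying $\int_{\mathbb{R}} (1\wedge |\xi|^2)\, f(\xi)\,d\xi<\infty$, and let $X=\{X(t),t\in\mathbb{R}\}$ be the centered Gaussian process with stationary increments defined by $$X(t)=\int_{\mathbb{R}} \big(e^{it\xi}-1\big)\, f^{1/2}(\xi)\,dW(\xi),\qquad t\in\mathbb{R},$$ where $W$ is a complex Wiener measure (Hermitian, so that $X$ is real-valued). Let $\psi:\mathbb{R}\to\mathbb{R}$ satisfy condition $W(0,0,0)$, i.e. $\int_{\mathbb{R}}|\psi(t)|\,dt<\infty$, $\int_{\mathbb{R}}\psi(t)\,dt=0$, $\int_{\mathbb{R}}|t\,\psi(t)|\,dt<\infty$, there is $C_\psi>0$ with $|\psi(t)|\le C_\psi$ for all $t\in\mathbb{R}$, and there is $C'_\psi>0$ with $|\widehat\psi(\xi)|+|\widehat\psi'(\xi)|\le C'_\psi$ for all $\xi\in\mathbb{R}$. Then for every $(a,b)\in(0,\infty)\times\mathbb{R}$ the wavelet coefficient $$d_\psi(a,b):=a^{-1/2}\int_{\mathbb{R}}\psi\Big(\frac{t-b}{a}\Big)X(t)\,dt$$ is well defined and admits the frequency representation $$d_\psi(a,b)=\sqrt{a}\int_{\mathbb{R}} e^{ib\xi}\,\overline{\widehat\psi}(a\xi)\,f^{1/2}(\xi)\,dW(\xi).$$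
   Context: $\widehat\psi$ denotes the Fourier transform of $\psi$ and $\overline{\widehat\psi}$ its complex conjugate. $1\wedge x=\min(1,x)$. *)

theory Defs
  imports "HOL-Probability.Probability"
begin

definition fourier :: "(real \<Rightarrow> real) \<Rightarrow> real \<Rightarrow> complex" where
  "fourier \<psi> \<xi> = integral\<^sup>L lborel (\<lambda>t. cis (- (\<xi> * t)) * complex_of_real (\<psi> t))"

definition square_integrable :: "(real \<Rightarrow> complex) \<Rightarrow> bool" where
  "square_integrable g \<longleftrightarrow> g \<in> borel_measurable lborel \<and>
     integrable lborel (\<lambda>\<xi>. (cmod (g \<xi>))\<^sup>2)"

text \<open>A complex (Hermitian) Wiener measure W on the real line over the probability
  space M, given through its stochastic integral I g = integral of g dW, defined for all
  square-integrable g: linear, isometric (E[I g conj(I h)] = integral of g conj h),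
  Hermitian (conj(I g) = I(conj g(-.))), and centred Gaussian (every Re(I g) is a centred
  normal variable; by linearity all finite real linear combinations of real and imaginary
  parts of the I g are then jointly Gaussian).\<close>
definition complex_wiener_integral ::
  "'w measure \<Rightarrow> ((real \<Rightarrow> complex) \<Rightarrow> 'w \<Rightarrow> complex) \<Rightarrow> bool" where
  "complex_wiener_integral M I \<longleftrightarrow>
     prob_space M \<and>
     (\<forall>g. square_integrable g \<longrightarrow> I g \<in> borel_measurable M) \<and>
     (\<forall>g h c. square_integrable g \<longrightarrow> square_integrable h \<longrightarrow>
        (AE \<omega> in M. I (\<lambda>\<xi>. g \<xi> + c * h \<xi>) \<omega> = I g \<omega> + c * I h \<omega>)) \<and>
     (\<forall>g h. square_integrable g \<longrightarrow> square_integrable h \<longrightarrow>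
        integrable M (\<lambda>\<omega>. I g \<omega> * cnj (I h \<omega>)) \<and>
        integral\<^sup>L M (\<lambda>\<omega>. I g \<omega> * cnj (I h \<omega>)) =
          integral\<^sup>L lborel (\<lambda>\<xi>. g \<xi> * cnj (h \<xi>))) \<and>
     (\<forall>g. square_integrable g \<longrightarrow>
        (AE \<omega> in M. cnj (I g \<omega>) = I (\<lambda>\<xi>. cnj (g (- \<xi>))) \<omega>)) \<and>
     (\<forall>g. square_integrable g \<longrightarrow>
        (\<forall>s::real. integral\<^sup>L M (\<lambda>\<omega>. cis (s * Re (I g \<omega>))) =
           complex_of_real (exp (- (s\<^sup>2 * integral\<^sup>L M (\<lambda>\<omega>. (Re (I g \<omega>))\<^sup>2)) / 2))))"

end

theory Submission
  imports Defs
begin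


lemma cis_minus_one_le: "cmod (cis x - 1) \<le> \<bar>x\<bar>"
proof -
  have "cis x = iexp x" by (simp add: cis_conv_exp)
  with iexp_approx1[of x 0] show ?thesis by simp
qed

lemma cis_minus_one_le2: "cmod (cis x - 1) \<le> 2"
proof -
  have "cmod (cis x - 1) \<le> cmod (cis x) + cmod 1" by (rule norm_triangle_ineq4)
  then show ?thesis by simp
qed

lemma cis_sq_bound: "(cmod (cis (t * \<xi>) - 1))\<^sup>2 \<le> (2 + \<bar>t\<bar>)\<^sup>2 * min 1 (\<xi>\<^sup>2)"
proof (cases "\<xi>\<^sup>2 \<le> 1")
  case True
  have "(cmod (cis (t * \<xi>) - 1))\<^sup>2 \<le> \<bar>t * \<xi>\<bar>\<^sup>2"
    by (rule power_mono[OF cis_minus_one_le]) simp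
  also have "\<dots> = t\<^sup>2 * \<xi>\<^sup>2" by (simp add: power_mult_distrib)
  also have "\<dots> \<le> (2 + \<bar>t\<bar>)\<^sup>2 * \<xi>\<^sup>2"
  proof (rule mult_right_mono)
    have "\<bar>t\<bar> \<le> 2 + \<bar>t\<bar>" by simp
    then have "\<bar>t\<bar>\<^sup>2 \<le> (2 + \<bar>t\<bar>)\<^sup>2" by (rule power_mono) simp
    then show "t\<^sup>2 \<le> (2 + \<bar>t\<bar>)\<^sup>2" by simp
  qed simp
  finally show ?thesis using True by simp
next
  case False
  have "(cmod (cis (t * \<xi>) - 1))\<^sup>2 \<le> 2\<^sup>2"
    by (rule power_mono[OF cis_minus_one_le2]) simp
  also have "\<dots> \<le> (2 + \<bar>t\<bar>)\<^sup>2" by (rule power_mono) auto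
  finally show ?thesis using False by simp
qed



lemma amgm: fixes x y c :: real assumes "c > 0"
  shows "x * y \<le> (c * x\<^sup>2 + y\<^sup>2 / c) / 2"
proof -
  have e: "(c * x\<^sup>2 + y\<^sup>2 / c) / 2 - x * y = (c * x - y)\<^sup>2 / (2 * c)"
    using assms by (simp add: field_simps power2_eq_square)
  have "0 \<le> (c * x - y)\<^sup>2 / (2 * c)" using assms by simp
  then show ?thesis using e by linarith
qed

lemma L2_prod_integrable:
  fixes u v :: "'a \<Rightarrow> complex"
  assumes [measurable]: "u \<in> borel_measurable N" "v \<in> borel_measurable N"
    and "integrable N (\<lambda>y. (norm (u y))\<^sup>2)" "integrable N (\<lambda>y. (norm (v y))\<^sup>2)"
  shows "integrable N (\<lambda>y. u y * v y)"
proof -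
  have i: "integrable N (\<lambda>y. ((norm (u y))\<^sup>2 + (norm (v y))\<^sup>2) / 2)"
    using assms by simp
  have a: "AE y in N. norm (u y * v y) \<le> norm (((norm (u y))\<^sup>2 + (norm (v y))\<^sup>2) / 2)"
  proof (rule AE_I2)
    fix y
    have "norm (u y) * norm (v y) \<le> (1 * (norm (u y))\<^sup>2 + (norm (v y))\<^sup>2 / 1) / 2"
      by (rule amgm) simp
    then show "norm (u y * v y) \<le> norm (((norm (u y))\<^sup>2 + (norm (v y))\<^sup>2) / 2)"
      by (simp add: norm_mult)
  qed
  have m: "(\<lambda>y. u y * v y) \<in> borel_measurable N" by measurable
  show ?thesis by (rule Bochner_Integration.integrable_bound[OF i m a])
qed


lemma prod_int:
  fixes G :: "real \<Rightarrow> 'b \<Rightarrow> complex" and U :: "'b \<Rightarrow> complex" and \<phi> w :: "real \<Rightarrow> real"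
  assumes sf: "sigma_finite_measure N"
   and Gm[measurable]: "(\<lambda>(t,y). G t y) \<in> borel_measurable (lborel \<Otimes>\<^sub>M N)"
   and Um[measurable]: "U \<in> borel_measurable N" and \<phi>m[measurable]: "\<phi> \<in> borel_measurable borel"
   and wm[measurable]: "w \<in> borel_measurable borel"
   and U2: "integrable N (\<lambda>y. (norm (U y))\<^sup>2)"
   and G2: "\<And>t. integrable N (\<lambda>y. (norm (G t y))\<^sup>2)"
   and G2b: "\<And>t. (\<integral>y. (norm (G t y))\<^sup>2 \<partial>N) \<le> K * (w t)\<^sup>2"
   and wpos: "\<And>t. w t > 0"
   and \<phi>w: "integrable lborel (\<lambda>t. \<bar>\<phi> t\<bar> * w t)"
  shows "integrable (lborel \<Otimes>\<^sub>M N) (\<lambda>(t,y). of_real (\<phi> t) * G t y * U y)"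
proof -
  interpret N: sigma_finite_measure N by fact
  interpret pair_sigma_finite lborel N
    by (intro pair_sigma_finite.intro sigma_finite_lborel sf)
  have Gtm[measurable]: "G t \<in> borel_measurable N" for t
    using measurable_Pair2[OF Gm] by simp
  have GU: "integrable N (\<lambda>y. G t y * U y)" for t
    by (rule L2_prod_integrable[OF Gtm Um G2 U2])
  let ?EU = "\<integral>y. (norm (U y))\<^sup>2 \<partial>N"
  show ?thesis
  proof (rule Fubini_integrable)
    show "(\<lambda>(t,y). of_real (\<phi> t) * G t y * U y) \<in> borel_measurable (lborel \<Otimes>\<^sub>M N)"
      by measurable
    show "AE x in lborel. integrable N (\<lambda>y. case (x, y) of (t, y) \<Rightarrow> of_real (\<phi> t) * G t y * U y)"
    proof (rule AE_I2)
      fix x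
      have "integrable N (\<lambda>y. of_real (\<phi> x) * (G x y * U y))"
        by (intro integrable_mult_right GU)
      then show "integrable N (\<lambda>y. case (x, y) of (t, y) \<Rightarrow> of_real (\<phi> t) * G t y * U y)"
        by (simp add: mult.assoc)
    qed
    show "integrable lborel (\<lambda>x. \<integral>y. norm (case (x, y) of (t, y) \<Rightarrow> of_real (\<phi> t) * G t y * U y) \<partial>N)"
    proof (rule Bochner_Integration.integrable_bound[where f="\<lambda>t. \<bar>\<phi> t\<bar> * w t * ((\<bar>K\<bar> + ?EU) / 2)"])
      show "integrable lborel (\<lambda>t. \<bar>\<phi> t\<bar> * w t * ((\<bar>K\<bar> + ?EU) / 2))"
        using \<phi>w by (intro integrable_mult_left)
      show "(\<lambda>x. \<integral>y. norm (case (x, y) of (t, y) \<Rightarrow> of_real (\<phi> t) * G t y * U y) \<partial>N) \<in> borel_measurable lborel"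
        by (rule N.borel_measurable_lebesgue_integral) simp
      show "AE x in lborel. norm (\<integral>y. norm (case (x, y) of (t, y) \<Rightarrow> of_real (\<phi> t) * G t y * U y) \<partial>N)
             \<le> norm (\<bar>\<phi> x\<bar> * w x * ((\<bar>K\<bar> + ?EU) / 2))"
      proof (rule AE_I2)
        fix t
        have wt: "w t > 0" by (rule wpos)
        have int1: "integrable N (\<lambda>y. norm (G t y) * norm (U y))"
          using GU[of t] by (simp add: norm_mult[symmetric])
        have int2: "integrable N (\<lambda>y. ((norm (G t y))\<^sup>2 / w t + w t * (norm (U y))\<^sup>2) / 2)"
        proof -
          have "integrable N (\<lambda>y. (norm (G t y))\<^sup>2 / w t)" using G2[of t] by (rule integrable_divide_zero)
          moreover have "integrable N (\<lambda>y. w t * (norm (U y))\<^sup>2)" using U2 by (rule integrable_mult_right)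
          ultimately have "integrable N (\<lambda>y. (norm (G t y))\<^sup>2 / w t + w t * (norm (U y))\<^sup>2)" by (rule Bochner_Integration.integrable_add)
          then show ?thesis by (rule integrable_divide_zero)
        qed
        have "(\<integral>y. norm (G t y) * norm (U y) \<partial>N) \<le> (\<integral>y. ((norm (G t y))\<^sup>2 / w t + w t * (norm (U y))\<^sup>2) / 2 \<partial>N)"
        proof (rule integral_mono[OF int1 int2])
          fix y show "norm (G t y) * norm (U y) \<le> ((norm (G t y))\<^sup>2 / w t + w t * (norm (U y))\<^sup>2) / 2"
            using amgm[of "1 / w t" "norm (G t y)" "norm (U y)"] wt by (simp add: field_simps)
        qed
        also have "\<dots> = ((\<integral>y. (norm (G t y))\<^sup>2 \<partial>N) / w t + w t * ?EU) / 2"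
          using G2 U2 by simp
        also have "\<dots> \<le> (K * (w t)\<^sup>2 / w t + w t * ?EU) / 2"
          using G2b[of t] wt by (simp add: divide_right_mono)
        also have "\<dots> = w t * ((K + ?EU) / 2)"
          using wt by (simp add: power2_eq_square field_simps)
        also have "\<dots> \<le> w t * ((\<bar>K\<bar> + ?EU) / 2)"
          using wt by (intro mult_left_mono) simp_all
        finally have b: "(\<integral>y. norm (G t y) * norm (U y) \<partial>N) \<le> w t * ((\<bar>K\<bar> + ?EU) / 2)" .
        have "(\<integral>y. norm (case (t, y) of (t, y) \<Rightarrow> of_real (\<phi> t) * G t y * U y) \<partial>N)
            = \<bar>\<phi> t\<bar> * (\<integral>y. norm (G t y) * norm (U y) \<partial>N)"
          by (simp add: norm_mult mult.assoc)
        moreover have "0 \<le> (\<integral>y. norm (G t y) * norm (U y) \<partial>N)" by simp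
        ultimately show "norm (\<integral>y. norm (case (t, y) of (t, y) \<Rightarrow> of_real (\<phi> t) * G t y * U y) \<partial>N)
             \<le> norm (\<bar>\<phi> t\<bar> * w t * ((\<bar>K\<bar> + ?EU) / 2))"
          using b wt mult_left_mono[OF b, of "\<bar>\<phi> t\<bar>"]
          by (simp add: abs_mult mult.assoc)
      qed
    qed
  qed
qed

lemma prod_fubini:
  fixes G :: "real \<Rightarrow> 'b \<Rightarrow> complex" and U :: "'b \<Rightarrow> complex" and \<phi> :: "real \<Rightarrow> real"
  assumes sf: "sigma_finite_measure N"
   and int: "integrable (lborel \<Otimes>\<^sub>M N) (\<lambda>(t,y). of_real (\<phi> t) * G t y * U y)"
  shows "(\<integral>y. (\<integral>t. of_real (\<phi> t) * G t y \<partial>lborel) * U y \<partial>N)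
       = (\<integral>t. of_real (\<phi> t) * (\<integral>y. G t y * U y \<partial>N) \<partial>lborel)"
proof -
  interpret N: sigma_finite_measure N by fact
  interpret pair_sigma_finite lborel N
    by (intro pair_sigma_finite.intro sigma_finite_lborel sf)
  have F: "(\<integral>y. (\<integral>t. of_real (\<phi> t) * G t y * U y \<partial>lborel) \<partial>N)
       = (\<integral>t. (\<integral>y. of_real (\<phi> t) * G t y * U y \<partial>N) \<partial>lborel)"
    by (rule Fubini_integral[OF int])
  have e1: "(\<lambda>y. (\<integral>t. of_real (\<phi> t) * G t y \<partial>lborel) * U y) = (\<lambda>y. \<integral>t. of_real (\<phi> t) * G t y * U y \<partial>lborel)"
    by (rule ext, rule integral_mult_left_zero[symmetric])
  have e2: "(\<lambda>t. of_real (\<phi> t) * (\<integral>y. G t y * U y \<partial>N)) = (\<lambda>t. \<integral>y. of_real (\<phi> t) * G t y * U y \<partial>N)"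
    by (rule ext) (simp only: mult.assoc integral_mult_right_zero)
  show ?thesis by (simp only: e1 e2 F)
qed



lemma cis_borel[measurable]: "cis \<in> borel_measurable borel"
  by (rule borel_measurable_continuous_onI) (intro continuous_intros)

lemma cnj_borel[measurable]: "cnj \<in> borel_measurable borel"
  by (rule borel_measurable_continuous_onI) (intro continuous_intros)

locale wsetup =
  fixes f \<psi> :: "real \<Rightarrow> real" and M :: "'w measure" and I :: "(real \<Rightarrow> complex) \<Rightarrow> 'w \<Rightarrow> complex"
    and X :: "real \<Rightarrow> 'w \<Rightarrow> real" and a b :: real
  assumes f_meas[measurable]: "f \<in> borel_measurable borel"
    and f_nonneg: "\<And>\<xi>. f \<xi> \<ge> 0"
    and f_int: "integrable lborel (\<lambda>\<xi>. min 1 (\<xi>\<^sup>2) * f \<xi>)"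
    and W: "complex_wiener_integral M I"
    and X_meas[measurable]: "(\<lambda>(t, \<omega>). X t \<omega>) \<in> borel_measurable (lborel \<Otimes>\<^sub>M M)"
    and X_def: "\<And>t. AE \<omega> in M. complex_of_real (X t \<omega>) =
                  I (\<lambda>\<xi>. (cis (t * \<xi>) - 1) * complex_of_real (sqrt (f \<xi>))) \<omega>"
    and \<psi>_meas[measurable]: "\<psi> \<in> borel_measurable borel"
    and \<psi>_int: "integrable lborel \<psi>"
    and \<psi>_mean: "integral\<^sup>L lborel \<psi> = 0"
    and \<psi>_moment: "integrable lborel (\<lambda>t. t * \<psi> t)"
    and a_pos: "a > 0"
begin

definition "\<phi> t = \<psi> ((t - b) / a)"
definition "w (t::real) = (2::real) + \<bar>t\<bar>"
definition "m \<xi> = min 1 (\<xi>\<^sup>2) * f \<xi>"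
definition "K = (\<integral>\<xi>. m \<xi> \<partial>lborel)"
definition "g t \<xi> = (cis (t * \<xi>) - 1) * complex_of_real (sqrt (f \<xi>))"
definition "h \<xi> = complex_of_real (sqrt a) * cis (b * \<xi>) * cnj (fourier \<psi> (a * \<xi>)) * complex_of_real (sqrt (f \<xi>))"
definition "Z \<omega> = a powr (-1/2) * (\<integral>t. \<psi> ((t - b) / a) * X t \<omega> \<partial>lborel)"
definition "A = (\<integral>t. \<bar>\<phi> t\<bar> * w t \<partial>lborel)"

lemma prob: "prob_space M"
  using W unfolding complex_wiener_integral_def by blast

lemma I_meas: "square_integrable k \<Longrightarrow> I k \<in> borel_measurable M"
  using W unfolding complex_wiener_integral_def by blast

lemma I_iso:
  assumes "square_integrable k" "square_integrable l"
  shows "integrable M (\<lambda>\<omega>. I k \<omega> * cnj (I l \<omega>))"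
    "(\<integral>\<omega>. I k \<omega> * cnj (I l \<omega>) \<partial>M) = (\<integral>\<xi>. k \<xi> * cnj (l \<xi>) \<partial>lborel)"
  using W assms unfolding complex_wiener_integral_def by blast+

lemma phi_meas[measurable]: "\<phi> \<in> borel_measurable borel"
  unfolding \<phi>_def[abs_def] by measurable

lemma w_meas[measurable]: "w \<in> borel_measurable borel"
  unfolding w_def[abs_def] by measurable

lemma w_pos: "w t > 0" unfolding w_def by simp

lemma m_meas[measurable]: "m \<in> borel_measurable borel"
  unfolding m_def[abs_def] by measurable

lemma m_nonneg: "m \<xi> \<ge> 0" unfolding m_def using f_nonneg by simp

lemma m_int: "integrable lborel m"
  using f_int unfolding m_def[abs_def] .

lemma K_nonneg: "K \<ge> 0" unfolding K_def using m_nonneg by simp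

lemma g_meas[measurable]: "(\<lambda>(t, \<xi>). g t \<xi>) \<in> borel_measurable (lborel \<Otimes>\<^sub>M lborel)"
  unfolding g_def by measurable

lemma g_meas1[measurable]: "g t \<in> borel_measurable lborel"
  unfolding g_def by measurable

lemma g_norm_sq: "(norm (g t \<xi>))\<^sup>2 \<le> (w t)\<^sup>2 * m \<xi>"
proof -
  have "(norm (g t \<xi>))\<^sup>2 = (cmod (cis (t * \<xi>) - 1))\<^sup>2 * f \<xi>"
    unfolding g_def using f_nonneg[of \<xi>] by (simp add: norm_mult power_mult_distrib)
  also have "\<dots> \<le> ((2 + \<bar>t\<bar>)\<^sup>2 * min 1 (\<xi>\<^sup>2)) * f \<xi>"
    by (rule mult_right_mono[OF cis_sq_bound f_nonneg])
  finally show ?thesis unfolding w_def m_def by (simp add: mult.assoc)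
qed

lemma g_norm: "norm (g t \<xi>) \<le> w t * sqrt (m \<xi>)"
proof -
  have "norm (g t \<xi>) = sqrt ((norm (g t \<xi>))\<^sup>2)" by simp
  also have "\<dots> \<le> sqrt ((w t)\<^sup>2 * m \<xi>)" by (rule real_sqrt_le_mono[OF g_norm_sq])
  also have "\<dots> = w t * sqrt (m \<xi>)" using w_pos[of t] by (simp add: real_sqrt_mult)
  finally show ?thesis .
qed

lemma g_sq_int: "integrable lborel (\<lambda>\<xi>. (norm (g t \<xi>))\<^sup>2)"
proof -
  have i: "integrable lborel (\<lambda>\<xi>. (w t)\<^sup>2 * m \<xi>)" using m_int by (rule integrable_mult_right)
  have me: "(\<lambda>\<xi>. (norm (g t \<xi>))\<^sup>2) \<in> borel_measurable lborel" by measurable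
  have "AE \<xi> in lborel. norm ((norm (g t \<xi>))\<^sup>2) \<le> norm ((w t)\<^sup>2 * m \<xi>)"
    using g_norm_sq m_nonneg by (intro AE_I2) simp
  then show ?thesis by (rule Bochner_Integration.integrable_bound[OF i me])
qed

lemma g_SI: "square_integrable (g t)"
  unfolding square_integrable_def using g_sq_int by simp

lemma g_sq_bound: "(\<integral>\<xi>. (norm (g t \<xi>))\<^sup>2 \<partial>lborel) \<le> K * (w t)\<^sup>2"
proof -
  have "(\<integral>\<xi>. (norm (g t \<xi>))\<^sup>2 \<partial>lborel) \<le> (\<integral>\<xi>. (w t)\<^sup>2 * m \<xi> \<partial>lborel)"
    by (rule integral_mono[OF g_sq_int integrable_mult_right[OF m_int] g_norm_sq])
  also have "\<dots> = K * (w t)\<^sup>2" unfolding K_def by simp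
  finally show ?thesis .
qed

lemma g_eq: "g t = (\<lambda>\<xi>. (cis (t * \<xi>) - 1) * complex_of_real (sqrt (f \<xi>)))"
  by (rule ext) (simp add: g_def)

lemma X_g: "AE \<omega> in M. complex_of_real (X t \<omega>) = I (g t) \<omega>"
  using X_def[of t] unfolding g_eq .

lemma Xt_meas[measurable]: "X t \<in> borel_measurable M"
  using measurable_Pair2[OF X_meas] by simp

lemma X2:
  shows "integrable M (\<lambda>\<omega>. (X t \<omega>)\<^sup>2)" "(\<integral>\<omega>. (X t \<omega>)\<^sup>2 \<partial>M) = (\<integral>\<xi>. (norm (g t \<xi>))\<^sup>2 \<partial>lborel)"
proof -
  have ae: "AE \<omega> in M. complex_of_real ((X t \<omega>)\<^sup>2) = I (g t) \<omega> * cnj (I (g t) \<omega>)"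
    using X_g[of t] by eventually_elim (metis complex_cnj_complex_of_real of_real_mult power2_eq_square)
  have im: "I (g t) \<in> borel_measurable M" by (rule I_meas[OF g_SI])
  have ic: "integrable M (\<lambda>\<omega>. I (g t) \<omega> * cnj (I (g t) \<omega>))" by (rule I_iso(1)[OF g_SI g_SI])
  have m1: "(\<lambda>\<omega>. complex_of_real ((X t \<omega>)\<^sup>2)) \<in> borel_measurable M" by measurable
  have m2: "(\<lambda>\<omega>. I (g t) \<omega> * cnj (I (g t) \<omega>)) \<in> borel_measurable M" using im by measurable
  have "integrable M (\<lambda>\<omega>. complex_of_real ((X t \<omega>)\<^sup>2))"
    using ic integrable_cong_AE[OF m1 m2 ae] by simp
  then show i: "integrable M (\<lambda>\<omega>. (X t \<omega>)\<^sup>2)"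
    by (rule complex_of_real_integrable_eq[THEN iffD1])
  have "complex_of_real (\<integral>\<omega>. (X t \<omega>)\<^sup>2 \<partial>M) = (\<integral>\<omega>. complex_of_real ((X t \<omega>)\<^sup>2) \<partial>M)"
    by (rule integral_complex_of_real[symmetric])
  also have "\<dots> = (\<integral>\<omega>. I (g t) \<omega> * cnj (I (g t) \<omega>) \<partial>M)"
    by (rule integral_cong_AE[OF m1 m2 ae])
  also have "\<dots> = (\<integral>\<xi>. g t \<xi> * cnj (g t \<xi>) \<partial>lborel)" by (rule I_iso(2)[OF g_SI g_SI])
  also have "\<dots> = (\<integral>\<xi>. complex_of_real ((norm (g t \<xi>))\<^sup>2) \<partial>lborel)"
    by (simp only: complex_norm_square)
  also have "\<dots> = complex_of_real (\<integral>\<xi>. (norm (g t \<xi>))\<^sup>2 \<partial>lborel)" by (rule integral_complex_of_real)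
  finally show "(\<integral>\<omega>. (X t \<omega>)\<^sup>2 \<partial>M) = (\<integral>\<xi>. (norm (g t \<xi>))\<^sup>2 \<partial>lborel)"
    by (simp only: of_real_eq_iff)
qed

lemma phi_w: "integrable lborel (\<lambda>t. \<bar>\<phi> t\<bar> * w t)"
proof -
  have i1: "integrable lborel (\<lambda>x. (2 + \<bar>b\<bar>) * \<bar>\<psi> x\<bar> + a * \<bar>x * \<psi> x\<bar>)"
    using \<psi>_int \<psi>_moment by (intro Bochner_Integration.integrable_add integrable_mult_right integrable_abs)
  have me: "(\<lambda>x. \<bar>\<phi> (b + a * x)\<bar> * w (b + a * x)) \<in> borel_measurable lborel" by measurable
  have "AE x in lborel. norm (\<bar>\<phi> (b + a * x)\<bar> * w (b + a * x)) \<le> norm ((2 + \<bar>b\<bar>) * \<bar>\<psi> x\<bar> + a * \<bar>x * \<psi> x\<bar>)"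
  proof (rule AE_I2)
    fix x
    have p: "\<phi> (b + a * x) = \<psi> x" unfolding \<phi>_def using a_pos by simp
    have t1: "\<bar>b + a * x\<bar> \<le> \<bar>b\<bar> + \<bar>a * x\<bar>" by (rule abs_triangle_ineq)
    have t2: "\<bar>a * x\<bar> = a * \<bar>x\<bar>" using a_pos by (simp add: abs_mult)
    have t3: "2 + \<bar>b + a * x\<bar> \<le> 2 + \<bar>b\<bar> + a * \<bar>x\<bar>" using t1 t2 by linarith
    have "\<bar>\<psi> x\<bar> * (2 + \<bar>b + a * x\<bar>) \<le> \<bar>\<psi> x\<bar> * (2 + \<bar>b\<bar> + a * \<bar>x\<bar>)"
      by (rule mult_left_mono[OF t3]) simp
    also have "\<dots> = (2 + \<bar>b\<bar>) * \<bar>\<psi> x\<bar> + a * \<bar>x * \<psi> x\<bar>" by (simp add: abs_mult algebra_simps)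
    finally have le: "\<bar>\<psi> x\<bar> * (2 + \<bar>b + a * x\<bar>) \<le> (2 + \<bar>b\<bar>) * \<bar>\<psi> x\<bar> + a * \<bar>x * \<psi> x\<bar>" .
    have n1: "norm (\<bar>\<phi> (b + a * x)\<bar> * w (b + a * x)) = \<bar>\<psi> x\<bar> * (2 + \<bar>b + a * x\<bar>)"
      unfolding p w_def by (simp add: abs_mult)
    have n2: "0 \<le> (2 + \<bar>b\<bar>) * \<bar>\<psi> x\<bar> + a * \<bar>x * \<psi> x\<bar>" using a_pos by simp
    show "norm (\<bar>\<phi> (b + a * x)\<bar> * w (b + a * x)) \<le> norm ((2 + \<bar>b\<bar>) * \<bar>\<psi> x\<bar> + a * \<bar>x * \<psi> x\<bar>)"
      unfolding n1 by (simp only: real_norm_def abs_of_nonneg[OF n2] le)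
  qed
  from Bochner_Integration.integrable_bound[OF i1 me this]
  have "integrable lborel (\<lambda>x. \<bar>\<phi> (b + a * x)\<bar> * w (b + a * x))" .
  note i2 = this
  have ne: "a \<noteq> 0" using a_pos by simp
  from i2 show ?thesis
    by (rule iffD1[OF lborel_integrable_real_affine_iff[where c=a and t=b and f="\<lambda>t. \<bar>\<phi> t\<bar> * w t", OF ne]])
qed

lemma phi_int: "integrable lborel \<phi>"
proof -
  have ae: "AE t in lborel. norm (\<phi> t) \<le> norm (\<bar>\<phi> t\<bar> * w t)"
  proof (rule AE_I2)
    fix t
    have "\<bar>\<phi> t\<bar> * 1 \<le> \<bar>\<phi> t\<bar> * w t" by (rule mult_left_mono) (simp_all add: w_def)
    then show "norm (\<phi> t) \<le> norm (\<bar>\<phi> t\<bar> * w t)" using w_pos[of t] by (simp add: abs_mult)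
  qed
  have me: "\<phi> \<in> borel_measurable lborel" by measurable
  show ?thesis by (rule Bochner_Integration.integrable_bound[OF phi_w me ae])
qed

lemma A_nonneg: "A \<ge> 0"
  unfolding A_def
proof (rule integral_nonneg_AE, rule AE_I2)
  fix t show "0 \<le> \<bar>\<phi> t\<bar> * w t" using w_pos[of t] by simp
qed

end


context wsetup begin

lemma psi_cis_int: "integrable lborel (\<lambda>u. cis (c * u) * complex_of_real (\<psi> u))"
proof -
  have me: "(\<lambda>u. cis (c * u) * complex_of_real (\<psi> u)) \<in> borel_measurable lborel" by measurable
  have ae: "AE u in lborel. norm (cis (c * u) * complex_of_real (\<psi> u)) \<le> norm (\<psi> u)"
    by (intro AE_I2) (simp add: norm_mult)
  show ?thesis by (rule Bochner_Integration.integrable_bound[OF \<psi>_int me ae])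
qed

lemma fourier_id:
  "(\<integral>t. complex_of_real (\<phi> t) * g t \<xi> \<partial>lborel)
     = complex_of_real a * cis (b * \<xi>) * cnj (fourier \<psi> (a * \<xi>)) * complex_of_real (sqrt (f \<xi>))"
proof -
  let ?s = "complex_of_real (sqrt (f \<xi>))"
  have e0: "(\<lambda>t. complex_of_real (\<phi> t) * g t \<xi>) = (\<lambda>t. complex_of_real (\<phi> t) * (cis (t * \<xi>) - 1) * ?s)"
    by (rule ext) (simp add: g_def mult.assoc)
  have e0': "(\<integral>t. complex_of_real (\<phi> t) * (cis (t * \<xi>) - 1) * ?s \<partial>lborel)
      = (\<integral>t. complex_of_real (\<phi> t) * (cis (t * \<xi>) - 1) \<partial>lborel) * ?s"
    by (rule integral_mult_left_zero)
  have ne: "a \<noteq> 0" using a_pos by simp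
  have aff: "(\<integral>t. complex_of_real (\<phi> t) * (cis (t * \<xi>) - 1) \<partial>lborel)
      = \<bar>a\<bar> *\<^sub>R (\<integral>u. complex_of_real (\<phi> (b + a * u)) * (cis ((b + a * u) * \<xi>) - 1) \<partial>lborel)"
    by (rule lborel_integral_real_affine[OF ne])
  have e1: "(\<lambda>u. complex_of_real (\<phi> (b + a * u)) * (cis ((b + a * u) * \<xi>) - 1))
      = (\<lambda>u. cis (b * \<xi>) * (cis ((a * \<xi>) * u) * complex_of_real (\<psi> u)) - complex_of_real (\<psi> u))"
  proof (rule ext)
    fix u
    have p: "\<phi> (b + a * u) = \<psi> u" unfolding \<phi>_def using a_pos by simp
    have c: "cis ((b + a * u) * \<xi>) = cis (b * \<xi>) * cis ((a * \<xi>) * u)"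
      by (simp add: cis_mult algebra_simps)
    show "complex_of_real (\<phi> (b + a * u)) * (cis ((b + a * u) * \<xi>) - 1)
      = cis (b * \<xi>) * (cis ((a * \<xi>) * u) * complex_of_real (\<psi> u)) - complex_of_real (\<psi> u)"
      unfolding p c by (simp add: algebra_simps)
  qed
  have i1: "integrable lborel (\<lambda>u. cis (b * \<xi>) * (cis ((a * \<xi>) * u) * complex_of_real (\<psi> u)))"
    by (rule integrable_mult_right) (rule psi_cis_int)
  have i2: "integrable lborel (\<lambda>u. complex_of_real (\<psi> u))"
    using \<psi>_int by (rule integrable_of_real)
  have e2: "(\<integral>u. cis (b * \<xi>) * (cis ((a * \<xi>) * u) * complex_of_real (\<psi> u)) - complex_of_real (\<psi> u) \<partial>lborel)
      = cis (b * \<xi>) * (\<integral>u. cis ((a * \<xi>) * u) * complex_of_real (\<psi> u) \<partial>lborel)"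
  proof -
    have "(\<integral>u. cis (b * \<xi>) * (cis ((a * \<xi>) * u) * complex_of_real (\<psi> u)) - complex_of_real (\<psi> u) \<partial>lborel)
       = (\<integral>u. cis (b * \<xi>) * (cis ((a * \<xi>) * u) * complex_of_real (\<psi> u)) \<partial>lborel) - (\<integral>u. complex_of_real (\<psi> u) \<partial>lborel)"
      by (rule Bochner_Integration.integral_diff[OF i1 i2])
    also have "(\<integral>u. complex_of_real (\<psi> u) \<partial>lborel) = 0"
      using \<psi>_mean by (simp only: integral_complex_of_real of_real_0)
    also have "(\<integral>u. cis (b * \<xi>) * (cis ((a * \<xi>) * u) * complex_of_real (\<psi> u)) \<partial>lborel)
       = cis (b * \<xi>) * (\<integral>u. cis ((a * \<xi>) * u) * complex_of_real (\<psi> u) \<partial>lborel)"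
      by (rule integral_mult_right_zero)
    finally show ?thesis by simp
  qed
  have fc: "cnj (fourier \<psi> (a * \<xi>)) = (\<integral>u. cis ((a * \<xi>) * u) * complex_of_real (\<psi> u) \<partial>lborel)"
  proof -
    have "cnj (fourier \<psi> (a * \<xi>)) = (\<integral>u. cnj (cis (- (a * \<xi> * u)) * complex_of_real (\<psi> u)) \<partial>lborel)"
      unfolding fourier_def by (rule Bochner_Integration.integral_cnj[symmetric])
    also have "\<dots> = (\<integral>u. cis ((a * \<xi>) * u) * complex_of_real (\<psi> u) \<partial>lborel)"
      by (simp add: cis_cnj)
    finally show ?thesis .
  qed
  have "(\<integral>t. complex_of_real (\<phi> t) * g t \<xi> \<partial>lborel)
      = (\<bar>a\<bar> *\<^sub>R (cis (b * \<xi>) * cnj (fourier \<psi> (a * \<xi>)))) * ?s"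
    unfolding e0 e0' aff e1 e2 fc ..
  also have "\<dots> = complex_of_real a * cis (b * \<xi>) * cnj (fourier \<psi> (a * \<xi>)) * ?s"
    using a_pos by (simp add: scaleR_conv_of_real mult.assoc)
  finally show ?thesis .
qed

lemma powr_half: "a powr (-1/2) * a = sqrt a"
proof -
  have "a powr (-1/2) = inverse (a powr (1/2))"
    using powr_minus[of a "1/2"] by simp
  also have "a powr (1/2) = sqrt a" using a_pos by (simp add: powr_half_sqrt)
  finally have "a powr (-1/2) * a = inverse (sqrt a) * (sqrt a * sqrt a)"
    using a_pos by simp
  also have "\<dots> = sqrt a" using a_pos by (simp add: field_simps)
  finally show ?thesis .
qed

lemma h_eq: "h \<xi> = complex_of_real (a powr (-1/2)) * (\<integral>t. complex_of_real (\<phi> t) * g t \<xi> \<partial>lborel)"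
proof -
  have "complex_of_real (a powr (-1/2)) * complex_of_real a = complex_of_real (sqrt a)"
    using powr_half by (metis of_real_mult)
  then show ?thesis unfolding fourier_id h_def by (simp add: mult.assoc[symmetric])
qed

lemma h_fun: "h = (\<lambda>\<xi>. complex_of_real (a powr (-1/2)) * (\<integral>t. complex_of_real (\<phi> t) * g t \<xi> \<partial>lborel))"
  by (rule ext) (rule h_eq)

lemma h_meas[measurable]: "h \<in> borel_measurable lborel"
proof -
  have "(\<lambda>(\<xi>, t). complex_of_real (\<phi> t) * g t \<xi>) \<in> borel_measurable (lborel \<Otimes>\<^sub>M lborel)"
    by measurable
  then have "(\<lambda>\<xi>. \<integral>t. complex_of_real (\<phi> t) * g t \<xi> \<partial>lborel) \<in> borel_measurable lborel"
    by (rule sigma_finite_measure.borel_measurable_lebesgue_integral[OF sigma_finite_lborel])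
  then show ?thesis unfolding h_fun by measurable
qed

lemma phig_int: "integrable lborel (\<lambda>t. complex_of_real (\<phi> t) * g t \<xi>)"
proof -
  have i: "integrable lborel (\<lambda>t. \<bar>\<phi> t\<bar> * w t * sqrt (m \<xi>))"
    using phi_w by (rule integrable_mult_left)
  have me: "(\<lambda>t. complex_of_real (\<phi> t) * g t \<xi>) \<in> borel_measurable lborel" by measurable
  have ae: "AE t in lborel. norm (complex_of_real (\<phi> t) * g t \<xi>) \<le> norm (\<bar>\<phi> t\<bar> * w t * sqrt (m \<xi>))"
  proof (rule AE_I2)
    fix t
    have "\<bar>\<phi> t\<bar> * norm (g t \<xi>) \<le> \<bar>\<phi> t\<bar> * (w t * sqrt (m \<xi>))"
      by (rule mult_left_mono[OF g_norm]) simp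
    moreover have "0 \<le> \<bar>\<phi> t\<bar> * w t * sqrt (m \<xi>)" using w_pos[of t] m_nonneg[of \<xi>] by simp
    ultimately show "norm (complex_of_real (\<phi> t) * g t \<xi>) \<le> norm (\<bar>\<phi> t\<bar> * w t * sqrt (m \<xi>))"
      by (simp add: norm_mult mult.assoc)
  qed
  show ?thesis by (rule Bochner_Integration.integrable_bound[OF i me ae])
qed

lemma h_norm: "norm (h \<xi>) \<le> a powr (-1/2) * (A * sqrt (m \<xi>))"
proof -
  have "norm (\<integral>t. complex_of_real (\<phi> t) * g t \<xi> \<partial>lborel) \<le> (\<integral>t. norm (complex_of_real (\<phi> t) * g t \<xi>) \<partial>lborel)"
    by (rule integral_norm_bound)
  also have "\<dots> \<le> (\<integral>t. \<bar>\<phi> t\<bar> * w t * sqrt (m \<xi>) \<partial>lborel)"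
  proof (rule integral_mono)
    show "integrable lborel (\<lambda>t. norm (complex_of_real (\<phi> t) * g t \<xi>))"
      by (rule integrable_norm[OF phig_int])
    show "integrable lborel (\<lambda>t. \<bar>\<phi> t\<bar> * w t * sqrt (m \<xi>))"
      using phi_w by (rule integrable_mult_left)
    fix t
    have "\<bar>\<phi> t\<bar> * norm (g t \<xi>) \<le> \<bar>\<phi> t\<bar> * (w t * sqrt (m \<xi>))"
      by (rule mult_left_mono[OF g_norm]) simp
    then show "norm (complex_of_real (\<phi> t) * g t \<xi>) \<le> \<bar>\<phi> t\<bar> * w t * sqrt (m \<xi>)"
      by (simp add: norm_mult mult.assoc)
  qed
  also have "\<dots> = A * sqrt (m \<xi>)" unfolding A_def by (rule integral_mult_left_zero)
  finally have n: "norm (\<integral>t. complex_of_real (\<phi> t) * g t \<xi> \<partial>lborel) \<le> A * sqrt (m \<xi>)" .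
  have "norm (h \<xi>) = a powr (-1/2) * norm (\<integral>t. complex_of_real (\<phi> t) * g t \<xi> \<partial>lborel)"
    unfolding h_eq by (simp add: norm_mult)
  also have "\<dots> \<le> a powr (-1/2) * (A * sqrt (m \<xi>))"
    by (rule mult_left_mono[OF n]) simp
  finally show ?thesis .
qed

lemma h_sq_int: "integrable lborel (\<lambda>\<xi>. (norm (h \<xi>))\<^sup>2)"
proof -
  have i: "integrable lborel (\<lambda>\<xi>. (a powr (-1/2) * A)\<^sup>2 * m \<xi>)"
    using m_int by (rule integrable_mult_right)
  have me: "(\<lambda>\<xi>. (norm (h \<xi>))\<^sup>2) \<in> borel_measurable lborel" by measurable
  have ae: "AE \<xi> in lborel. norm ((norm (h \<xi>))\<^sup>2) \<le> norm ((a powr (-1/2) * A)\<^sup>2 * m \<xi>)"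
  proof (rule AE_I2)
    fix \<xi>
    have "(norm (h \<xi>))\<^sup>2 \<le> (a powr (-1/2) * (A * sqrt (m \<xi>)))\<^sup>2"
      by (rule power_mono[OF h_norm]) simp
    also have "\<dots> = (a powr (-1/2) * A)\<^sup>2 * m \<xi>"
      using m_nonneg[of \<xi>] by (simp add: power_mult_distrib)
    finally show "norm ((norm (h \<xi>))\<^sup>2) \<le> norm ((a powr (-1/2) * A)\<^sup>2 * m \<xi>)"
      using m_nonneg[of \<xi>] by simp
  qed
  show ?thesis by (rule Bochner_Integration.integrable_bound[OF i me ae])
qed

lemma h_SI: "square_integrable h"
  unfolding square_integrable_def using h_sq_int by simp

end


context wsetup begin

lemma sf_M: "sigma_finite_measure M"
  by (rule prob_space_imp_sigma_finite[OF prob])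

lemma fin_M: "finite_measure M"
  by (rule prob_space.finite_measure[OF prob])

lemma pair_LM: "pair_sigma_finite lborel M"
  by (intro pair_sigma_finite.intro sigma_finite_lborel sf_M)

lemma X_G2: "integrable M (\<lambda>\<omega>. (norm (complex_of_real (X t \<omega>)))\<^sup>2)"
  using X2(1)[of t] by simp

lemma X_G2b: "(\<integral>\<omega>. (norm (complex_of_real (X t \<omega>)))\<^sup>2 \<partial>M) \<le> K * (w t)\<^sup>2"
  using X2(2)[of t] g_sq_bound[of t] by simp

lemma XU_int:
  assumes Um: "U \<in> borel_measurable M" and U2: "integrable M (\<lambda>\<omega>. (norm (U \<omega>))\<^sup>2)"
  shows "integrable (lborel \<Otimes>\<^sub>M M) (\<lambda>(t,\<omega>). complex_of_real (\<phi> t) * complex_of_real (X t \<omega>) * U \<omega>)"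
proof -
  have Gm: "(\<lambda>(t,\<omega>). complex_of_real (X t \<omega>)) \<in> borel_measurable (lborel \<Otimes>\<^sub>M M)" by measurable
  show ?thesis
    by (rule prod_int[where G="\<lambda>t \<omega>. complex_of_real (X t \<omega>)" and K=K and w=w,
          OF sf_M Gm Um phi_meas w_meas U2 X_G2 X_G2b w_pos phi_w])
qed

lemma XU_fub:
  assumes Um: "U \<in> borel_measurable M" and U2: "integrable M (\<lambda>\<omega>. (norm (U \<omega>))\<^sup>2)"
  shows "(\<integral>\<omega>. complex_of_real (\<integral>t. \<phi> t * X t \<omega> \<partial>lborel) * U \<omega> \<partial>M)
       = (\<integral>t. complex_of_real (\<phi> t) * (\<integral>\<omega>. complex_of_real (X t \<omega>) * U \<omega> \<partial>M) \<partial>lborel)"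
proof -
  have e: "(\<lambda>\<omega>. (\<integral>t. complex_of_real (\<phi> t) * complex_of_real (X t \<omega>) \<partial>lborel) * U \<omega>)
      = (\<lambda>\<omega>. complex_of_real (\<integral>t. \<phi> t * X t \<omega> \<partial>lborel) * U \<omega>)"
    by (rule ext) (simp only: of_real_mult[symmetric] integral_complex_of_real)
  from prod_fubini[OF sf_M XU_int[OF Um U2]] show ?thesis unfolding e .
qed

lemma Z_eq: "Z \<omega> = a powr (-1/2) * (\<integral>t. \<phi> t * X t \<omega> \<partial>lborel)"
  unfolding Z_def \<phi>_def ..

lemma AE_int: "AE \<omega> in M. integrable lborel (\<lambda>t. \<psi> ((t - b) / a) * X t \<omega>)"
proof -
  interpret pair_sigma_finite lborel M by (rule pair_LM)
  have c1: "(\<lambda>_. (1::complex)) \<in> borel_measurable M" by simp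
  have c2: "integrable M (\<lambda>\<omega>. (norm ((\<lambda>_. (1::complex)) \<omega>))\<^sup>2)"
    by (simp add: finite_measure.integrable_const[OF fin_M])
  have "AE \<omega> in M. integrable lborel (\<lambda>t. complex_of_real (\<phi> t) * complex_of_real (X t \<omega>) * 1)"
    by (rule AE_integrable_snd[OF XU_int[OF c1 c2]])
  then show ?thesis
  proof (rule AE_mp, intro AE_I2 impI)
    fix \<omega>
    assume "integrable lborel (\<lambda>t. complex_of_real (\<phi> t) * complex_of_real (X t \<omega>) * 1)"
    then have "integrable lborel (\<lambda>t. complex_of_real (\<phi> t * X t \<omega>))"
      by (simp only: mult_1_right of_real_mult)
    then have "integrable lborel (\<lambda>t. \<phi> t * X t \<omega>)"
      by (rule complex_of_real_integrable_eq[THEN iffD1])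
    then show "integrable lborel (\<lambda>t. \<psi> ((t - b) / a) * X t \<omega>)"
      unfolding \<phi>_def .
  qed
qed

lemma Z_meas[measurable]: "Z \<in> borel_measurable M"
proof -
  have "(\<lambda>(\<omega>, t). \<phi> t * X t \<omega>) \<in> borel_measurable (M \<Otimes>\<^sub>M lborel)" by measurable
  then have "(\<lambda>\<omega>. \<integral>t. \<phi> t * X t \<omega> \<partial>lborel) \<in> borel_measurable M"
    by (rule sigma_finite_measure.borel_measurable_lebesgue_integral[OF sigma_finite_lborel])
  then have "(\<lambda>\<omega>. a powr (-1/2) * (\<integral>t. \<phi> t * X t \<omega> \<partial>lborel)) \<in> borel_measurable M"
    by measurable
  then show ?thesis unfolding Z_eq[abs_def] .
qed

end


lemma ennreal_integral_le_nn:
  fixes f :: "'a \<Rightarrow> real"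
  assumes "\<And>x. f x \<ge> 0"
  shows "ennreal (integral\<^sup>L N f) \<le> (\<integral>\<^sup>+x. ennreal (f x) \<partial>N)"
proof (cases "integrable N f")
  case True
  have "(\<integral>\<^sup>+x. ennreal (f x) \<partial>N) = ennreal (integral\<^sup>L N f)"
    by (rule nn_integral_eq_integral[OF True]) (simp add: assms)
  then show ?thesis by simp
next
  case False
  then show ?thesis by (simp add: not_integrable_integral_eq)
qed

context wsetup begin

definition "S \<omega> = (\<integral>\<^sup>+t. ennreal (\<bar>\<phi> t\<bar> * \<bar>X t \<omega>\<bar>) \<partial>lborel)"
definition "T \<omega> = (\<integral>\<^sup>+t. ennreal (\<bar>\<phi> t\<bar> / w t * (X t \<omega>)\<^sup>2) \<partial>lborel)"

lemma S_meas[measurable]: "S \<in> borel_measurable M"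
proof -
  have "(\<lambda>(\<omega>, t). ennreal (\<bar>\<phi> t\<bar> * \<bar>X t \<omega>\<bar>)) \<in> borel_measurable (M \<Otimes>\<^sub>M lborel)" by measurable
  then show ?thesis unfolding S_def[abs_def]
    by (rule sigma_finite_measure.borel_measurable_nn_integral[OF sigma_finite_lborel])
qed

lemma T_meas[measurable]: "T \<in> borel_measurable M"
proof -
  have "(\<lambda>(\<omega>, t). ennreal (\<bar>\<phi> t\<bar> / w t * (X t \<omega>)\<^sup>2)) \<in> borel_measurable (M \<Otimes>\<^sub>M lborel)" by measurable
  then show ?thesis unfolding T_def[abs_def]
    by (rule sigma_finite_measure.borel_measurable_nn_integral[OF sigma_finite_lborel])
qed

lemma A_nn: "(\<integral>\<^sup>+t. ennreal (\<bar>\<phi> t\<bar> * w t) \<partial>lborel) = ennreal A"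
  unfolding A_def
proof (rule nn_integral_eq_integral[OF phi_w], rule AE_I2)
  fix t show "0 \<le> \<bar>\<phi> t\<bar> * w t" using w_pos[of t] by simp
qed

lemma S_CS: assumes om: "\<omega> \<in> space M" shows "(S \<omega>)\<^sup>2 \<le> ennreal A * T \<omega>"
proof -
  let ?F = "\<lambda>t. ennreal (sqrt (\<bar>\<phi> t\<bar> * w t))"
  let ?G = "\<lambda>t. ennreal (sqrt (\<bar>\<phi> t\<bar> / w t) * \<bar>X t \<omega>\<bar>)"
  have Fm: "?F \<in> borel_measurable lborel" by measurable
  have Gm: "?G \<in> borel_measurable lborel" using om by measurable
  have cs: "(\<integral>\<^sup>+t. ?F t * ?G t \<partial>lborel)\<^sup>2 \<le> (\<integral>\<^sup>+t. ?F t ^ 2 \<partial>lborel) * (\<integral>\<^sup>+t. ?G t ^ 2 \<partial>lborel)"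
    by (rule Cauchy_Schwarz_nn_integral[OF Fm Gm])
  have e1: "?F t * ?G t = ennreal (\<bar>\<phi> t\<bar> * \<bar>X t \<omega>\<bar>)" for t
  proof -
    have wt: "w t > 0" by (rule w_pos)
    have "sqrt (\<bar>\<phi> t\<bar> * w t) * (sqrt (\<bar>\<phi> t\<bar> / w t) * \<bar>X t \<omega>\<bar>)
        = sqrt ((\<bar>\<phi> t\<bar> * w t) * (\<bar>\<phi> t\<bar> / w t)) * \<bar>X t \<omega>\<bar>"
      by (simp only: real_sqrt_mult mult.assoc)
    also have "(\<bar>\<phi> t\<bar> * w t) * (\<bar>\<phi> t\<bar> / w t) = (\<bar>\<phi> t\<bar>)\<^sup>2"
      using wt by (simp add: power2_eq_square)
    finally have q1: "sqrt (\<bar>\<phi> t\<bar> * w t) * (sqrt (\<bar>\<phi> t\<bar> / w t) * \<bar>X t \<omega>\<bar>) = \<bar>\<phi> t\<bar> * \<bar>X t \<omega>\<bar>"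
      by simp
    have q2: "ennreal (sqrt (\<bar>\<phi> t\<bar> * w t)) * ennreal (sqrt (\<bar>\<phi> t\<bar> / w t) * \<bar>X t \<omega>\<bar>)
        = ennreal (sqrt (\<bar>\<phi> t\<bar> * w t) * (sqrt (\<bar>\<phi> t\<bar> / w t) * \<bar>X t \<omega>\<bar>))"
      by (rule ennreal_mult[symmetric]) (use wt in simp_all)
    show ?thesis unfolding q2 q1 ..
  qed
  have e2: "?F t ^ 2 = ennreal (\<bar>\<phi> t\<bar> * w t)" for t
  proof -
    have wt: "w t > 0" by (rule w_pos)
    have "?F t ^ 2 = ennreal ((sqrt (\<bar>\<phi> t\<bar> * w t))\<^sup>2)" by (rule ennreal_power) (use wt in simp)
    also have "(sqrt (\<bar>\<phi> t\<bar> * w t))\<^sup>2 = \<bar>\<phi> t\<bar> * w t" using wt by simp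
    finally show ?thesis .
  qed
  have e3: "?G t ^ 2 = ennreal (\<bar>\<phi> t\<bar> / w t * (X t \<omega>)\<^sup>2)" for t
  proof -
    have wt: "w t > 0" by (rule w_pos)
    have "?G t ^ 2 = ennreal ((sqrt (\<bar>\<phi> t\<bar> / w t) * \<bar>X t \<omega>\<bar>)\<^sup>2)" by (rule ennreal_power) (use wt in simp)
    also have "(sqrt (\<bar>\<phi> t\<bar> / w t) * \<bar>X t \<omega>\<bar>)\<^sup>2 = \<bar>\<phi> t\<bar> / w t * (X t \<omega>)\<^sup>2"
      using wt by (simp add: power_mult_distrib)
    finally show ?thesis .
  qed
  show ?thesis using cs unfolding e1 e2 e3 S_def T_def A_nn .
qed

lemma T_int: "(\<integral>\<^sup>+\<omega>. T \<omega> \<partial>M) \<le> ennreal (K * A)"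
proof -
  interpret pair_sigma_finite lborel M by (rule pair_LM)
  have me: "(\<lambda>(t, \<omega>). ennreal (\<bar>\<phi> t\<bar> / w t * (X t \<omega>)\<^sup>2)) \<in> borel_measurable (lborel \<Otimes>\<^sub>M M)"
    by measurable
  have "(\<integral>\<^sup>+\<omega>. T \<omega> \<partial>M) = (\<integral>\<^sup>+t. (\<integral>\<^sup>+\<omega>. ennreal (\<bar>\<phi> t\<bar> / w t * (X t \<omega>)\<^sup>2) \<partial>M) \<partial>lborel)"
    unfolding T_def by (rule Fubini'[OF me])
  also have "\<dots> \<le> (\<integral>\<^sup>+t. ennreal (\<bar>\<phi> t\<bar> * w t * K) \<partial>lborel)"
  proof (rule nn_integral_mono)
    fix t
    have wt: "w t > 0" by (rule w_pos)
    have i: "integrable M (\<lambda>\<omega>. \<bar>\<phi> t\<bar> / w t * (X t \<omega>)\<^sup>2)"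
      using X2(1)[of t] by (rule integrable_mult_right)
    have "(\<integral>\<^sup>+\<omega>. ennreal (\<bar>\<phi> t\<bar> / w t * (X t \<omega>)\<^sup>2) \<partial>M) = ennreal (\<integral>\<omega>. \<bar>\<phi> t\<bar> / w t * (X t \<omega>)\<^sup>2 \<partial>M)"
      by (rule nn_integral_eq_integral[OF i]) (intro AE_I2, use wt in simp)
    also have "(\<integral>\<omega>. \<bar>\<phi> t\<bar> / w t * (X t \<omega>)\<^sup>2 \<partial>M) = \<bar>\<phi> t\<bar> / w t * (\<integral>\<omega>. (X t \<omega>)\<^sup>2 \<partial>M)"
      by (rule integral_mult_right_zero)
    also have "\<dots> \<le> \<bar>\<phi> t\<bar> / w t * (K * (w t)\<^sup>2)"
      by (rule mult_left_mono) (use X2(2)[of t] g_sq_bound[of t] wt in simp_all)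
    also have "\<dots> = \<bar>\<phi> t\<bar> * w t * K" using wt by (simp add: power2_eq_square)
    finally show "(\<integral>\<^sup>+\<omega>. ennreal (\<bar>\<phi> t\<bar> / w t * (X t \<omega>)\<^sup>2) \<partial>M) \<le> ennreal (\<bar>\<phi> t\<bar> * w t * K)"
      by (simp add: ennreal_leI)
  qed
  also have "\<dots> = ennreal (\<integral>t. \<bar>\<phi> t\<bar> * w t * K \<partial>lborel)"
  proof (rule nn_integral_eq_integral[OF integrable_mult_left[OF phi_w]], rule AE_I2)
    fix t show "0 \<le> \<bar>\<phi> t\<bar> * w t * K" using w_pos[of t] K_nonneg by simp
  qed
  also have "(\<integral>t. \<bar>\<phi> t\<bar> * w t * K \<partial>lborel) = K * A"
    unfolding A_def by simp
  finally show ?thesis .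
qed

lemma S2_finite: "(\<integral>\<^sup>+\<omega>. (S \<omega>)\<^sup>2 \<partial>M) < \<infinity>"
proof -
  have "(\<integral>\<^sup>+\<omega>. (S \<omega>)\<^sup>2 \<partial>M) \<le> (\<integral>\<^sup>+\<omega>. ennreal A * T \<omega> \<partial>M)"
    by (rule nn_integral_mono) (rule S_CS)
  also have "\<dots> = ennreal A * (\<integral>\<^sup>+\<omega>. T \<omega> \<partial>M)"
    by (rule nn_integral_cmult) measurable
  also have "\<dots> \<le> ennreal A * ennreal (K * A)"
    by (rule mult_left_mono[OF T_int]) simp
  also have "\<dots> < \<infinity>" by (simp add: ennreal_mult_less_top)
  finally show ?thesis .
qed

lemma Z_L2: "integrable M (\<lambda>\<omega>. (Z \<omega>)\<^sup>2)"
proof (rule integrableI_bounded)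
  show "(\<lambda>\<omega>. (Z \<omega>)\<^sup>2) \<in> borel_measurable M" by measurable
  let ?c = "(a powr (-1/2))\<^sup>2"
  have pt: "ennreal (norm ((Z \<omega>)\<^sup>2)) \<le> ennreal ?c * (S \<omega>)\<^sup>2" for \<omega>
  proof -
    let ?J = "\<integral>t. \<bar>\<phi> t\<bar> * \<bar>X t \<omega>\<bar> \<partial>lborel"
    have J0: "0 \<le> ?J" by simp
    have "\<bar>\<integral>t. \<phi> t * X t \<omega> \<partial>lborel\<bar> \<le> (\<integral>t. norm (\<phi> t * X t \<omega>) \<partial>lborel)"
      using integral_norm_bound[of lborel "\<lambda>t. \<phi> t * X t \<omega>"] by simp
    also have "\<dots> = ?J" by (simp add: abs_mult)
    finally have j: "\<bar>\<integral>t. \<phi> t * X t \<omega> \<partial>lborel\<bar> \<le> ?J" .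
    have "\<bar>Z \<omega>\<bar> = a powr (-1/2) * \<bar>\<integral>t. \<phi> t * X t \<omega> \<partial>lborel\<bar>"
      unfolding Z_eq by (simp add: abs_mult)
    also have "\<dots> \<le> a powr (-1/2) * ?J" by (rule mult_left_mono[OF j]) simp
    finally have zj: "\<bar>Z \<omega>\<bar> \<le> a powr (-1/2) * ?J" .
    have "(Z \<omega>)\<^sup>2 = \<bar>Z \<omega>\<bar>\<^sup>2" by simp
    also have "\<dots> \<le> (a powr (-1/2) * ?J)\<^sup>2" by (rule power_mono[OF zj]) simp
    also have "\<dots> = ?c * ?J\<^sup>2" by (simp add: power_mult_distrib)
    finally have z2: "(Z \<omega>)\<^sup>2 \<le> ?c * ?J\<^sup>2" .
    have jS: "ennreal ?J \<le> S \<omega>" unfolding S_def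
      by (rule ennreal_integral_le_nn) simp
    have "ennreal (norm ((Z \<omega>)\<^sup>2)) = ennreal ((Z \<omega>)\<^sup>2)" by simp
    also have "\<dots> \<le> ennreal (?c * ?J\<^sup>2)" by (rule ennreal_leI[OF z2])
    also have "\<dots> = ennreal ?c * (ennreal ?J)\<^sup>2"
      by (simp add: ennreal_mult ennreal_power J0)
    also have "\<dots> \<le> ennreal ?c * (S \<omega>)\<^sup>2"
      by (rule mult_left_mono[OF power_mono[OF jS]]) simp_all
    finally show ?thesis .
  qed
  have "(\<integral>\<^sup>+\<omega>. ennreal (norm ((Z \<omega>)\<^sup>2)) \<partial>M) \<le> (\<integral>\<^sup>+\<omega>. ennreal ?c * (S \<omega>)\<^sup>2 \<partial>M)"
    by (rule nn_integral_mono) (rule pt)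
  also have "\<dots> = ennreal ?c * (\<integral>\<^sup>+\<omega>. (S \<omega>)\<^sup>2 \<partial>M)"
    by (rule nn_integral_cmult) measurable
  also have "\<dots> < \<infinity>" using S2_finite by (simp add: ennreal_mult_less_top)
  finally show "(\<integral>\<^sup>+\<omega>. ennreal (norm ((Z \<omega>)\<^sup>2)) \<partial>M) < \<infinity>" .
qed

end


context wsetup begin

lemma SI_meas: "square_integrable k \<Longrightarrow> k \<in> borel_measurable lborel"
  unfolding square_integrable_def by blast

lemma SI_sq: "square_integrable k \<Longrightarrow> integrable lborel (\<lambda>\<xi>. (norm (k \<xi>))\<^sup>2)"
  unfolding square_integrable_def by blast

lemma I_L2:
  assumes k: "square_integrable k"
  shows "integrable M (\<lambda>\<omega>. (norm (I k \<omega>))\<^sup>2)"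
proof -
  have "integrable M (\<lambda>\<omega>. I k \<omega> * cnj (I k \<omega>))" by (rule I_iso(1)[OF k k])
  then have "integrable M (\<lambda>\<omega>. complex_of_real ((norm (I k \<omega>))\<^sup>2))"
    by (simp only: complex_norm_square)
  then show ?thesis by (rule complex_of_real_integrable_eq[THEN iffD1])
qed

lemma fub_k:
  assumes k: "square_integrable k"
  shows "complex_of_real (a powr (-1/2)) * (\<integral>t. complex_of_real (\<phi> t) * (\<integral>\<xi>. g t \<xi> * cnj (k \<xi>) \<partial>lborel) \<partial>lborel)
     = (\<integral>\<xi>. h \<xi> * cnj (k \<xi>) \<partial>lborel)"
proof -
  have km[measurable]: "k \<in> borel_measurable lborel" by (rule SI_meas[OF k])
  have Um: "(\<lambda>\<xi>. cnj (k \<xi>)) \<in> borel_measurable lborel" by measurable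
  have U2: "integrable lborel (\<lambda>\<xi>. (norm (cnj (k \<xi>)))\<^sup>2)" using SI_sq[OF k] by simp
  have pi: "integrable (lborel \<Otimes>\<^sub>M lborel) (\<lambda>(t, \<xi>). complex_of_real (\<phi> t) * g t \<xi> * cnj (k \<xi>))"
    by (rule prod_int[where G=g and K=K and w=w, OF sigma_finite_lborel g_meas Um phi_meas w_meas U2
          g_sq_int g_sq_bound w_pos phi_w])
  have "(\<integral>t. complex_of_real (\<phi> t) * (\<integral>\<xi>. g t \<xi> * cnj (k \<xi>) \<partial>lborel) \<partial>lborel)
      = (\<integral>\<xi>. (\<integral>t. complex_of_real (\<phi> t) * g t \<xi> \<partial>lborel) * cnj (k \<xi>) \<partial>lborel)"
    by (rule prod_fubini[OF sigma_finite_lborel pi, symmetric])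
  then have "complex_of_real (a powr (-1/2)) * (\<integral>t. complex_of_real (\<phi> t) * (\<integral>\<xi>. g t \<xi> * cnj (k \<xi>) \<partial>lborel) \<partial>lborel)
      = complex_of_real (a powr (-1/2)) * (\<integral>\<xi>. (\<integral>t. complex_of_real (\<phi> t) * g t \<xi> \<partial>lborel) * cnj (k \<xi>) \<partial>lborel)"
    by simp
  also have "\<dots> = (\<integral>\<xi>. complex_of_real (a powr (-1/2)) * ((\<integral>t. complex_of_real (\<phi> t) * g t \<xi> \<partial>lborel) * cnj (k \<xi>)) \<partial>lborel)"
    by (rule integral_mult_right_zero[symmetric])
  also have "\<dots> = (\<integral>\<xi>. h \<xi> * cnj (k \<xi>) \<partial>lborel)"
    unfolding h_eq by (simp only: mult.assoc)
  finally show ?thesis .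
qed

lemma EZU:
  assumes Um: "U \<in> borel_measurable M" and U2: "integrable M (\<lambda>\<omega>. (norm (U \<omega>))\<^sup>2)"
  shows "(\<integral>\<omega>. complex_of_real (Z \<omega>) * U \<omega> \<partial>M)
     = complex_of_real (a powr (-1/2)) * (\<integral>t. complex_of_real (\<phi> t) * (\<integral>\<omega>. complex_of_real (X t \<omega>) * U \<omega> \<partial>M) \<partial>lborel)"
proof -
  have e: "(\<lambda>\<omega>. complex_of_real (Z \<omega>) * U \<omega>)
     = (\<lambda>\<omega>. complex_of_real (a powr (-1/2)) * (complex_of_real (\<integral>t. \<phi> t * X t \<omega> \<partial>lborel) * U \<omega>))"
    by (rule ext) (simp only: Z_eq of_real_mult mult.assoc)
  show ?thesis unfolding e integral_mult_right_zero XU_fub[OF Um U2] ..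
qed

lemma F_k:
  assumes k: "square_integrable k"
  shows "(\<integral>\<omega>. complex_of_real (Z \<omega>) * cnj (I k \<omega>) \<partial>M) = (\<integral>\<xi>. h \<xi> * cnj (k \<xi>) \<partial>lborel)"
proof -
  have Ikm[measurable]: "I k \<in> borel_measurable M" by (rule I_meas[OF k])
  have Um: "(\<lambda>\<omega>. cnj (I k \<omega>)) \<in> borel_measurable M" by measurable
  have U2: "integrable M (\<lambda>\<omega>. (norm (cnj (I k \<omega>)))\<^sup>2)" using I_L2[OF k] by simp
  have inner: "(\<integral>\<omega>. complex_of_real (X t \<omega>) * cnj (I k \<omega>) \<partial>M) = (\<integral>\<xi>. g t \<xi> * cnj (k \<xi>) \<partial>lborel)" for t
  proof -
    have Igm[measurable]: "I (g t) \<in> borel_measurable M" by (rule I_meas[OF g_SI])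
    have "(\<integral>\<omega>. complex_of_real (X t \<omega>) * cnj (I k \<omega>) \<partial>M) = (\<integral>\<omega>. I (g t) \<omega> * cnj (I k \<omega>) \<partial>M)"
    proof (rule integral_cong_AE)
      show "(\<lambda>\<omega>. complex_of_real (X t \<omega>) * cnj (I k \<omega>)) \<in> borel_measurable M" by measurable
      show "(\<lambda>\<omega>. I (g t) \<omega> * cnj (I k \<omega>)) \<in> borel_measurable M" by measurable
      show "AE \<omega> in M. complex_of_real (X t \<omega>) * cnj (I k \<omega>) = I (g t) \<omega> * cnj (I k \<omega>)"
        using X_g[of t] by eventually_elim simp
    qed
    also have "\<dots> = (\<integral>\<xi>. g t \<xi> * cnj (k \<xi>) \<partial>lborel)" by (rule I_iso(2)[OF g_SI k])
    finally show ?thesis .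
  qed
  show ?thesis unfolding EZU[OF Um U2] inner by (rule fub_k[OF k])
qed

end


context wsetup begin

definition "HH = (\<integral>\<xi>. h \<xi> * cnj (h \<xi>) \<partial>lborel)"

lemma HH_real: "cnj HH = HH"
proof -
  have "HH = (\<integral>\<xi>. complex_of_real ((norm (h \<xi>))\<^sup>2) \<partial>lborel)"
    unfolding HH_def by (simp only: complex_norm_square)
  also have "\<dots> = complex_of_real (\<integral>\<xi>. (norm (h \<xi>))\<^sup>2 \<partial>lborel)" by (rule integral_complex_of_real)
  finally show ?thesis by simp
qed

lemma Z_L2': "integrable M (\<lambda>\<omega>. (norm (complex_of_real (Z \<omega>)))\<^sup>2)"
  using Z_L2 by simp

lemma EZZ: "(\<integral>\<omega>. complex_of_real (Z \<omega>) * complex_of_real (Z \<omega>) \<partial>M) = HH"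
proof -
  have Um: "(\<lambda>\<omega>. complex_of_real (Z \<omega>)) \<in> borel_measurable M" by measurable
  have inner: "(\<integral>\<omega>. complex_of_real (X t \<omega>) * complex_of_real (Z \<omega>) \<partial>M) = (\<integral>\<xi>. h \<xi> * cnj (g t \<xi>) \<partial>lborel)" for t
  proof -
    have Igm[measurable]: "I (g t) \<in> borel_measurable M" by (rule I_meas[OF g_SI])
    have "(\<integral>\<omega>. complex_of_real (X t \<omega>) * complex_of_real (Z \<omega>) \<partial>M)
        = (\<integral>\<omega>. complex_of_real (Z \<omega>) * cnj (I (g t) \<omega>) \<partial>M)"
    proof (rule integral_cong_AE)
      show "(\<lambda>\<omega>. complex_of_real (X t \<omega>) * complex_of_real (Z \<omega>)) \<in> borel_measurable M" by measurable
      show "(\<lambda>\<omega>. complex_of_real (Z \<omega>) * cnj (I (g t) \<omega>)) \<in> borel_measurable M" by measurable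
      show "AE \<omega> in M. complex_of_real (X t \<omega>) * complex_of_real (Z \<omega>) = complex_of_real (Z \<omega>) * cnj (I (g t) \<omega>)"
        using X_g[of t]
      proof eventually_elim
        case (elim \<omega>)
        then have "cnj (I (g t) \<omega>) = complex_of_real (X t \<omega>)" by (metis complex_cnj_complex_of_real)
        then show ?case by (simp only: mult.commute)
      qed
    qed
    also have "\<dots> = (\<integral>\<xi>. h \<xi> * cnj (g t \<xi>) \<partial>lborel)" by (rule F_k[OF g_SI])
    finally show ?thesis .
  qed
  have c: "(\<integral>\<xi>. h \<xi> * cnj (g t \<xi>) \<partial>lborel) = cnj (\<integral>\<xi>. g t \<xi> * cnj (h \<xi>) \<partial>lborel)" for t
  proof -
    have "(\<lambda>\<xi>. h \<xi> * cnj (g t \<xi>)) = (\<lambda>\<xi>. cnj (g t \<xi> * cnj (h \<xi>)))"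
      by (rule ext) (simp add: mult.commute)
    then show ?thesis by (simp only: Bochner_Integration.integral_cnj)
  qed
  have c2: "(\<lambda>t. complex_of_real (\<phi> t) * cnj (\<integral>\<xi>. g t \<xi> * cnj (h \<xi>) \<partial>lborel))
      = (\<lambda>t. cnj (complex_of_real (\<phi> t) * (\<integral>\<xi>. g t \<xi> * cnj (h \<xi>) \<partial>lborel)))"
    by (rule ext) simp
  have "(\<integral>\<omega>. complex_of_real (Z \<omega>) * complex_of_real (Z \<omega>) \<partial>M)
      = complex_of_real (a powr (-1/2)) * (\<integral>t. complex_of_real (\<phi> t) * cnj (\<integral>\<xi>. g t \<xi> * cnj (h \<xi>) \<partial>lborel) \<partial>lborel)"
    unfolding EZU[OF Um Z_L2'] inner c ..
  also have "\<dots> = cnj (complex_of_real (a powr (-1/2)) * (\<integral>t. complex_of_real (\<phi> t) * (\<integral>\<xi>. g t \<xi> * cnj (h \<xi>) \<partial>lborel) \<partial>lborel))"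
    unfolding c2 Bochner_Integration.integral_cnj by simp
  also have "\<dots> = cnj HH" unfolding HH_def fub_k[OF h_SI] ..
  also have "\<dots> = HH" by (rule HH_real)
  finally show ?thesis .
qed

lemma final: "AE \<omega> in M. complex_of_real (Z \<omega>) = I h \<omega>"
proof -
  let ?P = "\<lambda>\<omega>. complex_of_real (Z \<omega>)"
  let ?Q = "\<lambda>\<omega>. I h \<omega>"
  have Pm[measurable]: "?P \<in> borel_measurable M" by measurable
  have Qm[measurable]: "?Q \<in> borel_measurable M" by (rule I_meas[OF h_SI])
  have cQm: "(\<lambda>\<omega>. cnj (?Q \<omega>)) \<in> borel_measurable M" by measurable
  have P2: "integrable M (\<lambda>\<omega>. (norm (?P \<omega>))\<^sup>2)" by (rule Z_L2')
  have Q2: "integrable M (\<lambda>\<omega>. (norm (?Q \<omega>))\<^sup>2)" by (rule I_L2[OF h_SI])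
  have cQ2: "integrable M (\<lambda>\<omega>. (norm (cnj (?Q \<omega>)))\<^sup>2)" using Q2 by simp
  have i1: "integrable M (\<lambda>\<omega>. ?P \<omega> * ?P \<omega>)" by (rule L2_prod_integrable[OF Pm Pm P2 P2])
  have i2: "integrable M (\<lambda>\<omega>. ?P \<omega> * cnj (?Q \<omega>))" by (rule L2_prod_integrable[OF Pm cQm P2 cQ2])
  have i3: "integrable M (\<lambda>\<omega>. ?Q \<omega> * ?P \<omega>)" by (rule L2_prod_integrable[OF Qm Pm Q2 P2])
  have i4: "integrable M (\<lambda>\<omega>. ?Q \<omega> * cnj (?Q \<omega>))" by (rule L2_prod_integrable[OF Qm cQm Q2 cQ2])
  have E1: "(\<integral>\<omega>. ?P \<omega> * ?P \<omega> \<partial>M) = HH" by (rule EZZ)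
  have E2: "(\<integral>\<omega>. ?P \<omega> * cnj (?Q \<omega>) \<partial>M) = HH" unfolding HH_def by (rule F_k[OF h_SI])
  have E3: "(\<integral>\<omega>. ?Q \<omega> * ?P \<omega> \<partial>M) = HH"
  proof -
    have "(\<lambda>\<omega>. ?Q \<omega> * ?P \<omega>) = (\<lambda>\<omega>. cnj (?P \<omega> * cnj (?Q \<omega>)))" by (rule ext) (simp add: mult.commute)
    then have "(\<integral>\<omega>. ?Q \<omega> * ?P \<omega> \<partial>M) = cnj (\<integral>\<omega>. ?P \<omega> * cnj (?Q \<omega>) \<partial>M)"
      by (simp only: Bochner_Integration.integral_cnj)
    then show ?thesis unfolding E2 HH_real .
  qed
  have E4: "(\<integral>\<omega>. ?Q \<omega> * cnj (?Q \<omega>) \<partial>M) = HH" unfolding HH_def by (rule I_iso(2)[OF h_SI h_SI])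
  have eq: "(\<lambda>\<omega>. complex_of_real ((norm (?P \<omega> - ?Q \<omega>))\<^sup>2))
      = (\<lambda>\<omega>. ?P \<omega> * ?P \<omega> - ?P \<omega> * cnj (?Q \<omega>) - ?Q \<omega> * ?P \<omega> + ?Q \<omega> * cnj (?Q \<omega>))"
  proof (rule ext)
    fix \<omega>
    have "complex_of_real ((norm (?P \<omega> - ?Q \<omega>))\<^sup>2) = (?P \<omega> - ?Q \<omega>) * cnj (?P \<omega> - ?Q \<omega>)"
      by (rule complex_norm_square)
    also have "\<dots> = ?P \<omega> * ?P \<omega> - ?P \<omega> * cnj (?Q \<omega>) - ?Q \<omega> * ?P \<omega> + ?Q \<omega> * cnj (?Q \<omega>)"
      by (simp add: algebra_simps)
    finally show "complex_of_real ((norm (?P \<omega> - ?Q \<omega>))\<^sup>2) = ?P \<omega> * ?P \<omega> - ?P \<omega> * cnj (?Q \<omega>) - ?Q \<omega> * ?P \<omega> + ?Q \<omega> * cnj (?Q \<omega>)" .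
  qed
  have i123: "integrable M (\<lambda>\<omega>. ?P \<omega> * ?P \<omega> - ?P \<omega> * cnj (?Q \<omega>) - ?Q \<omega> * ?P \<omega>)"
    by (intro Bochner_Integration.integrable_diff i1 i2 i3)
  have iall: "integrable M (\<lambda>\<omega>. ?P \<omega> * ?P \<omega> - ?P \<omega> * cnj (?Q \<omega>) - ?Q \<omega> * ?P \<omega> + ?Q \<omega> * cnj (?Q \<omega>))"
    by (rule Bochner_Integration.integrable_add[OF i123 i4])
  have "(\<integral>\<omega>. ?P \<omega> * ?P \<omega> - ?P \<omega> * cnj (?Q \<omega>) - ?Q \<omega> * ?P \<omega> + ?Q \<omega> * cnj (?Q \<omega>) \<partial>M)
     = (\<integral>\<omega>. ?P \<omega> * ?P \<omega> - ?P \<omega> * cnj (?Q \<omega>) - ?Q \<omega> * ?P \<omega> \<partial>M) + (\<integral>\<omega>. ?Q \<omega> * cnj (?Q \<omega>) \<partial>M)"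
    by (rule Bochner_Integration.integral_add[OF i123 i4])
  also have "(\<integral>\<omega>. ?P \<omega> * ?P \<omega> - ?P \<omega> * cnj (?Q \<omega>) - ?Q \<omega> * ?P \<omega> \<partial>M)
     = (\<integral>\<omega>. ?P \<omega> * ?P \<omega> - ?P \<omega> * cnj (?Q \<omega>) \<partial>M) - (\<integral>\<omega>. ?Q \<omega> * ?P \<omega> \<partial>M)"
    by (rule Bochner_Integration.integral_diff[OF Bochner_Integration.integrable_diff[OF i1 i2] i3])
  also have "(\<integral>\<omega>. ?P \<omega> * ?P \<omega> - ?P \<omega> * cnj (?Q \<omega>) \<partial>M)
     = (\<integral>\<omega>. ?P \<omega> * ?P \<omega> \<partial>M) - (\<integral>\<omega>. ?P \<omega> * cnj (?Q \<omega>) \<partial>M)"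
    by (rule Bochner_Integration.integral_diff[OF i1 i2])
  finally have "(\<integral>\<omega>. ?P \<omega> * ?P \<omega> - ?P \<omega> * cnj (?Q \<omega>) - ?Q \<omega> * ?P \<omega> + ?Q \<omega> * cnj (?Q \<omega>) \<partial>M) = 0"
    unfolding E1 E2 E3 E4 by simp
  then have z: "(\<integral>\<omega>. complex_of_real ((norm (?P \<omega> - ?Q \<omega>))\<^sup>2) \<partial>M) = 0"
    unfolding eq .
  have iN: "integrable M (\<lambda>\<omega>. (norm (?P \<omega> - ?Q \<omega>))\<^sup>2)"
    using iall unfolding eq[symmetric] by (rule complex_of_real_integrable_eq[THEN iffD1])
  have "(\<integral>\<omega>. (norm (?P \<omega> - ?Q \<omega>))\<^sup>2 \<partial>M) = 0"
    using z unfolding integral_complex_of_real by simp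
  then have "AE \<omega> in M. (norm (?P \<omega> - ?Q \<omega>))\<^sup>2 = 0"
    by (subst (asm) integral_nonneg_eq_0_iff_AE[OF iN]) simp_all
  then show ?thesis by eventually_elim simp
qed

end

theorem proposition1:
  fixes f :: "real \<Rightarrow> real" and \<psi> :: "real \<Rightarrow> real"
    and M :: "'w measure" and I :: "(real \<Rightarrow> complex) \<Rightarrow> 'w \<Rightarrow> complex"
    and X :: "real \<Rightarrow> 'w \<Rightarrow> real"
  assumes f_meas: "f \<in> borel_measurable borel"
    and f_nonneg: "\<And>\<xi>. f \<xi> \<ge> 0"
    and f_even: "\<And>\<xi>. f (- \<xi>) = f \<xi>"
    and f_int: "integrable lborel (\<lambda>\<xi>. min 1 (\<xi>\<^sup>2) * f \<xi>)"
    and W: "complex_wiener_integral M I"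
    and X_meas: "(\<lambda>(t, \<omega>). X t \<omega>) \<in> borel_measurable (lborel \<Otimes>\<^sub>M M)"
    and X_def: "\<And>t. AE \<omega> in M. complex_of_real (X t \<omega>) =
                  I (\<lambda>\<xi>. (cis (t * \<xi>) - 1) * complex_of_real (sqrt (f \<xi>))) \<omega>"
    and \<psi>_meas: "\<psi> \<in> borel_measurable borel"
    and \<psi>_int: "integrable lborel \<psi>"
    and \<psi>_mean: "integral\<^sup>L lborel \<psi> = 0"
    and \<psi>_moment: "integrable lborel (\<lambda>t. t * \<psi> t)"
    and \<psi>_bdd: "\<exists>C>0. \<forall>t. \<bar>\<psi> t\<bar> \<le> C"
    and \<psi>_hat_bdd: "\<exists>C'>0. \<forall>\<xi>. \<exists>D. (fourier \<psi> has_vector_derivative D) (at \<xi>) \<and>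
                         cmod (fourier \<psi> \<xi>) + cmod D \<le> C'"
  shows "\<forall>a>0. \<forall>b::real.
     (AE \<omega> in M. integrable lborel (\<lambda>t. \<psi> ((t - b) / a) * X t \<omega>)) \<and>
     (AE \<omega> in M. complex_of_real (a powr (-1/2) *
          integral\<^sup>L lborel (\<lambda>t. \<psi> ((t - b) / a) * X t \<omega>)) =
        I (\<lambda>\<xi>. complex_of_real (sqrt a) * cis (b * \<xi>) * cnj (fourier \<psi> (a * \<xi>))
               * complex_of_real (sqrt (f \<xi>))) \<omega>)"
  proof (intro allI impI)
  fix a b :: real
  assume a: "a > 0"
  interpret wsetup f \<psi> M I X a b
    by (rule wsetup.intro[OF f_meas f_nonneg f_int W X_meas X_def \<psi>_meas \<psi>_int \<psi>_mean \<psi>_moment a])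
  have hl: "(\<lambda>\<xi>. complex_of_real (sqrt a) * cis (b * \<xi>) * cnj (fourier \<psi> (a * \<xi>))
               * complex_of_real (sqrt (f \<xi>))) = h"
    by (rule ext) (simp only: h_def)
  show "(AE \<omega> in M. integrable lborel (\<lambda>t. \<psi> ((t - b) / a) * X t \<omega>)) \<and>
     (AE \<omega> in M. complex_of_real (a powr (-1/2) *
          integral\<^sup>L lborel (\<lambda>t. \<psi> ((t - b) / a) * X t \<omega>)) =
        I (\<lambda>\<xi>. complex_of_real (sqrt a) * cis (b * \<xi>) * cnj (fourier \<psi> (a * \<xi>))
               * complex_of_real (sqrt (f \<xi>))) \<omega>)"
  proof
    show "AE \<omega> in M. integrable lborel (\<lambda>t. \<psi> ((t - b) / a) * X t \<omega>)" by (rule AE_int)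
    show "AE \<omega> in M. complex_of_real (a powr (-1/2) *
          integral\<^sup>L lborel (\<lambda>t. \<psi> ((t - b) / a) * X t \<omega>)) =
        I (\<lambda>\<xi>. complex_of_real (sqrt a) * cis (b * \<xi>) * cnj (fourier \<psi> (a * \<xi>))
               * complex_of_real (sqrt (f \<xi>))) \<omega>"
      unfolding hl using final unfolding Z_def .
  qed
qed

end
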